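(* A tiling of the unit square by axis-parallel rectangles which is fixed by the dihedral group $D_8$ of symmetries of the square has either $4k$ or $4k+1$ tiles, for some nonnegative integer $k$.
   Context: A tiling of the unit square is a decomposition into finitely many axis-parallel rectangles with disjoint interiors; $D_8$ (order $8$) acts on tilings via the symmetries of the square, and a tiling is fixed if every symmetry maps it to itself. *)

theory Defs
  imports "HOL-Analysis.Analysis"
begin

definition unit_square :: "(real \<times> real) set" where
  "unit_square = {0..1} \<times> {0..1}"

definition is_rectangle :: "(real \<times> real) set \<Rightarrow> bool" where
  "is_rectangle R \<longleftrightarrow> (\<exists>a b c d. a < b \<and> c < d \<and> R = {a..b} \<times> {c..d})"

definition is_tiling :: "(real \<times> real) set set \<Rightarrow> bool" where
  "is_tiling T \<longleftrightarrow> finite T \<and> (\<forall>R\<in>T. is_rectangle R) \<and> \<Union>T = unit_square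
     \<and> (\<forall>R\<in>T. \<forall>S\<in>T. R \<noteq> S \<longrightarrow> interior R \<inter> interior S = {})"

definition D8 :: "(real \<times> real \<Rightarrow> real \<times> real) set" where
  "D8 = {\<lambda>(x,y). (x,y), \<lambda>(x,y). (1-x,y), \<lambda>(x,y). (x,1-y), \<lambda>(x,y). (1-x,1-y),
         \<lambda>(x,y). (y,x), \<lambda>(x,y). (1-y,x), \<lambda>(x,y). (y,1-x), \<lambda>(x,y). (1-y,1-x)}"

definition D8_fixed :: "(real \<times> real) set set \<Rightarrow> bool" where
  "D8_fixed T \<longleftrightarrow> (\<forall>g\<in>D8. (\<lambda>R. g ` R) ` T = T)"

end

theory Submission
  imports Defs
begin

lemma orbit4:
  assumes "finite A" "\<forall>x\<in>A. f x \<in> A" "\<forall>x\<in>A. f (f (f (f x))) = x"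
    "\<forall>x\<in>A. \<forall>y\<in>A. f (f x) = x \<longrightarrow> f (f y) = y \<longrightarrow> x = y"
  shows "card A mod 4 = 0 \<or> card A mod 4 = 1"
  using assms
proof (induction A rule: finite_psubset_induct)
  case (psubset A)
  show ?case
  proof (cases "\<exists>x\<in>A. f (f x) \<noteq> x")
    case False
    then have "card A \<le> Suc 0" using psubset.prems(3) card_le_Suc0_iff_eq[OF psubset.hyps(1)] by blast
    then show ?thesis by (cases "card A") auto
  next
    case True
    then obtain x where x: "x\<in>A" "f (f x) \<noteq> x" by blast
    let ?O = "{x, f x, f (f x), f (f (f x))}"
    have fx: "f x \<in> A" "f (f x) \<in> A" "f (f (f x)) \<in> A" using x psubset.prems(1,2) by auto
    have f4: "f (f (f (f x))) = x" using x psubset.prems(1,2) by auto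
    have f5: "f (f (f (f (f x)))) = f x" using fx psubset.prems(1,2) by auto
    have f6: "f (f (f (f (f (f x))))) = f (f x)" using fx psubset.prems(1,2) by auto
    have O: "?O \<subseteq> A" using x fx by auto
    have d1: "x \<noteq> f x"
    proof
      assume e: "x = f x"
      have "f x = f (f x)" using arg_cong[OF e, of f] .
      then show False using e x(2) by metis
    qed
    have d2: "x \<noteq> f (f (f x))"
    proof
      assume e: "x = f (f (f x))"
      have "f x = f (f (f (f x)))" using arg_cong[OF e, of f] .
      then have "f x = x" using f4 by simp
      then show False using d1 by simp
    qed
    have d3: "f x \<noteq> f (f x)"
    proof
      assume e: "f x = f (f x)"
      have "f (f (f x)) = f (f (f (f x)))" using arg_cong[OF e, of "\<lambda>z. f (f z)"] .
      then have "f (f (f x)) = x" using f4 by simp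
      then show False using d2 by simp
    qed
    have d4: "f x \<noteq> f (f (f x))"
    proof
      assume e: "f x = f (f (f x))"
      have "f (f (f (f x))) = f (f (f (f (f (f x)))))" using arg_cong[OF e, of "\<lambda>z. f (f (f z))"] .
      then have "x = f (f x)" using f4 f6 by simp
      then show False using x(2) by metis
    qed
    have d5: "f (f x) \<noteq> f (f (f x))"
    proof
      assume e: "f (f x) = f (f (f x))"
      have "f (f (f x)) = f (f (f (f x)))" using arg_cong[OF e, of f] .
      then have "f (f (f x)) = x" using f4 by simp
      then show False using d2 by simp
    qed
    have cO: "card ?O = 4" using d1 d2 d3 d4 d5 x(2) by auto
    define B where "B = A - ?O"
    have Bs: "B \<subset> A" using O B_def x by auto
    have Bcl: "\<forall>y\<in>B. f y \<in> B"
    proof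
      fix y assume y: "y \<in> B"
      then have yA: "y \<in> A" by (simp add: B_def)
      have y4: "f (f (f (f y))) = y" using yA psubset.prems(2) by auto
      have "f y \<notin> ?O"
      proof
        assume "f y \<in> ?O"
        then consider "f y = x" | "f y = f x" | "f y = f (f x)" | "f y = f (f (f x))" by blast
        then have "y \<in> ?O"
        proof cases
          case 1
          then have "f (f (f (f y))) = f (f (f x))" by metis
          then show ?thesis using y4 by simp
        next
          case 2
          then have "f (f (f (f y))) = f (f (f (f x)))" by metis
          then show ?thesis using y4 f4 by simp
        next
          case 3
          then have "f (f (f (f y))) = f (f (f (f (f x))))" by metis
          then show ?thesis using y4 f5 by simp
        next
          case 4
          then have "f (f (f (f y))) = f (f (f (f (f (f x)))))" by metis
          then show ?thesis using y4 f6 by simp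
        qed
        then show False using y B_def by auto
      qed
      then show "f y \<in> B" using yA psubset.prems(1) B_def by auto
    qed
    have IH: "card B mod 4 = 0 \<or> card B mod 4 = 1"
      using psubset.IH[OF Bs] Bcl Bs psubset.prems by blast
    have "card A = card B + 4"
      using card_Diff_subset[OF _ O] psubset.hyps cO card_mono[OF psubset.hyps O] B_def
      by (metis finite_subset O le_add_diff_inverse2 add.commute)
    then show ?thesis using IH by auto
  qed
qed

definition rot :: "real \<times> real \<Rightarrow> real \<times> real" where
  "rot = (\<lambda>(x,y). (1-y,x))"

lemma rot_D8: "rot \<in> D8" unfolding rot_def D8_def by simp

lemma centre_in:
  assumes "is_rectangle R" "rot ` (rot ` R) = R"
  shows "(1/2, 1/2) \<in> interior R"
proof -
  obtain a b c d where R: "a < b" "c < d" "R = {a..b} \<times> {c..d}"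
    using assms(1) unfolding is_rectangle_def by blast
  have "(a,c) \<in> R" "(b,d) \<in> R" using R by auto
  then have "rot (rot (a,c)) \<in> R" "rot (rot (b,d)) \<in> R" using assms(2) by blast+
  then have h: "1-a \<le> b" "1-c \<le> d" "a \<le> 1-b" "c \<le> 1 - d" using R by (auto simp: rot_def)
  have "open ({a<..<b} \<times> {c<..<d})" by (simp add: open_Times)
  moreover have "{a<..<b} \<times> {c<..<d} \<subseteq> R" using R by auto
  moreover have "(1/2, 1/2) \<in> {a<..<b} \<times> {c<..<d}" using h R by auto
  ultimately show ?thesis by (meson interior_maximal subsetD)
qed

theorem lemma10:
  fixes T :: "(real \<times> real) set set"
  assumes "is_tiling T" and "D8_fixed T"
  shows "\<exists>k::nat. card T = 4 * k \<or> card T = 4 * k + 1"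
proof -
  let ?f = "\<lambda>R. rot ` R"
  have fin: "finite T" using assms(1) by (simp add: is_tiling_def)
  have cl: "\<forall>R\<in>T. ?f R \<in> T" using assms(2) rot_D8 unfolding D8_fixed_def by blast
  have r4: "\<And>p. rot (rot (rot (rot p))) = p" by (auto simp: rot_def split: prod.splits)
  have f4: "\<forall>R\<in>T. ?f (?f (?f (?f R))) = R"
    by (simp add: image_image r4)
  have uniq: "\<forall>R\<in>T. \<forall>S\<in>T. ?f (?f R) = R \<longrightarrow> ?f (?f S) = S \<longrightarrow> R = S"
  proof (intro ballI impI)
    fix R S assume RS: "R \<in> T" "S \<in> T" "?f (?f R) = R" "?f (?f S) = S"
    have rect: "\<forall>R\<in>T. is_rectangle R" using assms(1) by (simp add: is_tiling_def)
    have disj: "\<forall>R\<in>T. \<forall>S\<in>T. R \<noteq> S \<longrightarrow> interior R \<inter> interior S = {}"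
      using assms(1) by (simp add: is_tiling_def)
    have "(1/2,1/2) \<in> interior R" using centre_in[of R] rect RS(1,3) by simp
    moreover have "(1/2,1/2) \<in> interior S" using centre_in[of S] rect RS(2,4) by simp
    ultimately show "R = S" using disj RS(1,2) by blast
  qed
  have "card T mod 4 = 0 \<or> card T mod 4 = 1" using orbit4[OF fin cl f4 uniq] .
  then show ?thesis by (metis div_mult_mod_eq mult.commute add_0_right)
qed

end
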